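(* If $f\in\mathrm{BV}^1$ then for every $n\ge1$, \[ n\,\|B_n(f)-f\|_\infty\le \frac{T_{f'}[-1,1]}{2}+\max\{\|O(f)\|_\infty,\|E(f)\|_\infty\}, \] where $T_{f'}[-1,1]$ is the total variation of $f'$ on $[-1,1]$.
   Context: Nodes: $x_{k,n}:=2k/n-1$, $k=0,\dots,n$. $B_n(f,x):=N_n(f,x)/D_n(x)$ for $x$ not a node, $B_n(f,x_{k,n}):=f(x_{k,n})$, where $N_n(f,x)=\sum_{k=0}^n(-1)^k\frac{f(x_{k,n})}{x-x_{k,n}}$ and $D_n(x)=\sum_{k=0}^n(-1)^k\frac{1}{x-x_{k,n}}$. $\mathrm{BV}^1$: functions $f:[-1,1]\to\mathbb{R}$ differentiable at every point of $[-1,1]$ (one-sided at $\pm1$) whose derivative $f'$ has bounded variation on $[-1,1]$. For $x\in(-1,1)$, $O(f,x):=\frac{f(x)-f(1)}{2(x-1)}-\frac{f(x)-f(-1)}{2(x+1)}$ and $E(f,x):=\frac{f(1)-f(x)}{2(x-1)}+\frac{f(-1)-f(x)}{2(x+1)}$; $\|O(f)\|_\infty,\|E(f)\|_\infty$ are suprema over $x\in(-1,1)$, and $\|B_n(f)-f\|_\infty=\sup_{x\in[-1,1]}|B_n(f,x)-f(x)|$. *)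

theory Defs
  imports "HOL-Analysis.Analysis"
begin

definition node :: "nat \<Rightarrow> nat \<Rightarrow> real" where
  "node n k = 2 * real k / real n - 1"

definition Bnum :: "nat \<Rightarrow> (real \<Rightarrow> real) \<Rightarrow> real \<Rightarrow> real" where
  "Bnum n f x = (\<Sum>k\<le>n. (-1) ^ k * f (node n k) / (x - node n k))"

definition Bden :: "nat \<Rightarrow> real \<Rightarrow> real" where
  "Bden n x = (\<Sum>k\<le>n. (-1) ^ k / (x - node n k))"

definition berrut :: "nat \<Rightarrow> (real \<Rightarrow> real) \<Rightarrow> real \<Rightarrow> real" where
  "berrut n f x = (if \<exists>k\<le>n. x = node n k then f x else Bnum n f x / Bden n x)"

definition var_sum :: "(real \<Rightarrow> real) \<Rightarrow> real list \<Rightarrow> real" where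
  "var_sum g xs = (\<Sum>i<length xs - 1. \<bar>g (xs ! Suc i) - g (xs ! i)\<bar>)"

definition var_sums :: "(real \<Rightarrow> real) \<Rightarrow> real \<Rightarrow> real \<Rightarrow> real set" where
  "var_sums g a b = {var_sum g xs | xs. sorted xs \<and> set xs \<subseteq> {a..b}}"

definition bounded_variation :: "(real \<Rightarrow> real) \<Rightarrow> real \<Rightarrow> real \<Rightarrow> bool" where
  "bounded_variation g a b \<longleftrightarrow> bdd_above (var_sums g a b)"

definition total_variation :: "(real \<Rightarrow> real) \<Rightarrow> real \<Rightarrow> real \<Rightarrow> real" where
  "total_variation g a b = Sup (var_sums g a b)"

definition Ofun :: "(real \<Rightarrow> real) \<Rightarrow> real \<Rightarrow> real" where
  "Ofun f x = (f x - f 1) / (2 * (x - 1)) - (f x - f (-1)) / (2 * (x + 1))"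

definition Efun :: "(real \<Rightarrow> real) \<Rightarrow> real \<Rightarrow> real" where
  "Efun f x = (f 1 - f x) / (2 * (x - 1)) + (f (-1) - f x) / (2 * (x + 1))"

definition sup_norm :: "(real \<Rightarrow> real) \<Rightarrow> real set \<Rightarrow> real" where
  "sup_norm g S = Sup ((\<lambda>x. \<bar>g x\<bar>) ` S)"

end

theory Submission
  imports Defs "HOL-Analysis.Analysis"
begin


lemma integ_rep:
  fixes f f' :: "real \<Rightarrow> real"
  assumes deriv: "\<And>x. x \<in> {-1..1} \<Longrightarrow> (f has_real_derivative f' x) (at x within {-1..1})"
    and z: "z \<in> {-1..1}" and t: "t \<in> {-1..1}" and tz: "t \<noteq> z"
  shows "((\<lambda>s. f' (z + s*(t-z))) has_integral (f t - f z)/(t-z)) {0..1}"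
proof -
  let ?g = "\<lambda>s::real. z + s*(t-z)"
  have img: "?g ` {0..1} \<subseteq> {-1..1}"
  proof
    fix y assume "y \<in> ?g ` {0..1}"
    then obtain s where s: "s \<in> {0..1}" "y = z + s*(t-z)" by auto
    have "y = (1-s)*z + s*t" using s by (simp add: algebra_simps)
    moreover have "(1-s)*z \<ge> (1-s)*(-1)" "s*t \<ge> s*(-1)" "(1-s)*z \<le> (1-s)*1" "s*t \<le> s*1"
      using s z t mult_left_mono[of "-1" z "1-s"] mult_left_mono[of "-1" t s]
        mult_left_mono[of z 1 "1-s"] mult_left_mono[of t 1 s] by auto
    ultimately show "y \<in> {-1..1}" by auto
  qed
  have d: "((\<lambda>s. f (?g s)) has_real_derivative f' (?g s) * (t-z)) (at s within {0..1})"
    if s: "s \<in> {0..1}" for s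
  proof -
    have g': "(?g has_real_derivative (t-z)) (at s within {0..1})"
      by (auto intro!: derivative_eq_intros)
    have "?g s \<in> ?g ` {0..1}" using s by (rule imageI)
    then have "?g s \<in> {-1..1}" using img by (rule subsetD[rotated])
    then have "(f has_real_derivative f' (?g s)) (at (?g s) within ?g ` {0..1})"
      using deriv DERIV_subset img by blast
    from DERIV_image_chain[OF this g'] show ?thesis by (simp add: comp_def)
  qed
  have "((\<lambda>s. f' (?g s) * (t-z)) has_integral (f (?g 1) - f (?g 0))) {0..1}"
    by (rule fundamental_theorem_of_calculus) (auto simp: has_real_derivative_iff_has_vector_derivative[symmetric] intro!: d)
  then have "((\<lambda>s. (1/(t-z)) * (f' (?g s) * (t-z))) has_integral (1/(t-z)) * (f (?g 1) - f (?g 0))) {0..1}"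
    by (rule has_integral_mult_right)
  moreover have "(\<lambda>s. (1/(t-z)) * (f' (?g s) * (t-z))) = (\<lambda>s. f' (?g s))" using tz by (auto simp: field_simps)
  ultimately show ?thesis by simp
qed

lemma alt_bounds:
  fixes c :: "nat \<Rightarrow> real"
  assumes "\<And>i. c (Suc i) \<le> c i" "\<And>i. c i \<ge> 0"
  shows "0 \<le> (\<Sum>i\<le>m. (-1)^i * c i) \<and> (\<Sum>i\<le>m. (-1)^i * c i) \<le> c 0"
  using assms
proof (induction m arbitrary: c)
  case 0 then show ?case by simp
next
  case (Suc m)
  have e: "(\<Sum>i\<le>Suc m. (-1)^i * c i) = c 0 - (\<Sum>i\<le>m. (-1)^i * c (Suc i))"
    by (subst sum.atMost_Suc_shift) (simp add: sum_negf[symmetric])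
  have "0 \<le> (\<Sum>i\<le>m. (-1)^i * c (Suc i)) \<and> (\<Sum>i\<le>m. (-1)^i * c (Suc i)) \<le> c (Suc 0)"
    using Suc.IH[of "\<lambda>i. c (Suc i)"] Suc.prems by auto
  then show ?case using e Suc.prems(1)[of 0] by auto
qed

lemma alt_lower:
  fixes c :: "nat \<Rightarrow> real"
  assumes "\<And>i. c (Suc i) \<le> c i" "\<And>i. c i \<ge> 0"
  shows "c 0 - c 1 \<le> (\<Sum>i\<le>m. (-1)^i * c i)"
proof (cases m)
  case 0 then show ?thesis using assms(2)[of 1] by simp
next
  case (Suc k)
  have e: "(\<Sum>i\<le>Suc k. (-1)^i * c i) = c 0 - (\<Sum>i\<le>k. (-1)^i * c (Suc i))"
    by (subst sum.atMost_Suc_shift) (simp add: sum_negf[symmetric])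
  have "(\<Sum>i\<le>k. (-1)^i * c (Suc i)) \<le> c (Suc 0)"
    using alt_bounds[of "\<lambda>i. c (Suc i)" k] assms by auto
  then show ?thesis using e Suc by simp
qed

lemma alt_identity:
  fixes a :: "nat \<Rightarrow> real"
  shows "2 * (\<Sum>k\<le>n. (-1)^k * a k) = a 0 + (-1)^n * a n + (\<Sum>k<n. (-1)^k * (a k - a (Suc k)))"
  by (induction n) (auto simp: algebra_simps)


lemma recip_ineq:
  fixes a b h :: real
  assumes a: "a > 0" and b: "b > 0" and h: "a + b = h"
  shows "1/a - 1/(a+h) + (1/b - 1/(b+h)) \<ge> 2/h"
proof -
  have h0: "h > 0" using a b h by simp
  have 1: "1/a - 1/(a+h) \<ge> 1/(2*a)"
  proof -
    have "1/a - 1/(a+h) = h/(a*(a+h))" using a h0 by (simp add: field_simps)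
    also have "\<dots> \<ge> 1/(2*a)"
    proof -
      have "h/(a*(a+h)) - 1/(2*a) = (h-a)/(2*a*(a+h))"
        using a b h0 by (simp add: divide_simps; simp add: algebra_simps)
      moreover have "(h-a)/(2*a*(a+h)) \<ge> 0" using a b h h0 by (intro divide_nonneg_nonneg) auto
      ultimately show ?thesis by linarith
    qed
    finally show ?thesis .
  qed
  have 2: "1/b - 1/(b+h) \<ge> 1/(2*b)"
  proof -
    have "1/b - 1/(b+h) = h/(b*(b+h))" using b h0 by (simp add: field_simps)
    also have "\<dots> \<ge> 1/(2*b)"
    proof -
      have "h/(b*(b+h)) - 1/(2*b) = (h-b)/(2*b*(b+h))"
        using a b h0 by (simp add: divide_simps; simp add: algebra_simps)
      moreover have "(h-b)/(2*b*(b+h)) \<ge> 0" using a b h h0 by (intro divide_nonneg_nonneg) auto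
      ultimately show ?thesis by linarith
    qed
    finally show ?thesis .
  qed
  have 3: "1/(2*a) + 1/(2*b) \<ge> 2/h"
  proof -
    have "0 \<le> (a-b)^2" by simp
    then have "4*a*b \<le> (a+b)^2" by (simp add: power2_eq_square algebra_simps)
    then show ?thesis using a b h by (simp add: field_simps power2_eq_square)
  qed
  show ?thesis using 1 2 3 by linarith
qed

lemma node_diff: "n \<ge> 1 \<Longrightarrow> node n k - node n m = (real k - real m) * (2 / real n)"
  by (simp add: node_def field_simps)

lemma den_bound:
  fixes x :: real
  assumes n: "n \<ge> 1" and x: "x \<in> {-1<..<1}" and nn: "\<And>k. k \<le> n \<Longrightarrow> x \<noteq> node n k"
  shows "\<bar>Bden n x\<bar> \<ge> real n"
proof -
  define h where "h = 2 / real n"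
  have h0: "h > 0" using n by (simp add: h_def)
  define t where "t = (x+1)*real n/2"
  define j where "j = nat \<lfloor>t\<rfloor>"
  have t0: "t > 0" using x n by (simp add: t_def)
  have tn: "t < real n" using x n by (simp add: t_def)
  have jt: "real j \<le> t" "t < real j + 1" using t0 unfolding j_def by linarith+
  have jn: "j < n" using jt tn by linarith
  have xt: "x = t * h - 1" using n by (simp add: t_def h_def field_simps)
  have nodej: "node n k = real k * h - 1" for k by (simp add: node_def h_def)
  define a where "a = x - node n j"
  define b where "b = node n (Suc j) - x"
  have "a \<ge> 0" using jt h0 by (simp add: a_def xt nodej mult_right_mono)
  moreover have "a \<noteq> 0" using nn[of j] jn by (simp add: a_def)
  ultimately have a0: "a > 0" by simp
  have "h * t < h * (real j + 1)" using jt h0 by (intro mult_strict_left_mono) auto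
  then have b0: "b > 0" by (simp add: b_def xt nodej algebra_simps)
  have ab: "a + b = h" by (simp add: a_def b_def nodej algebra_simps)
  define F where "F k = (-1::real)^k / (x - node n k)" for k
  have split: "{..n} = {..j} \<union> {Suc j..n}" using jn by auto
  have "Bden n x = sum F {..j} + sum F {Suc j..n}"
    unfolding Bden_def F_def[symmetric] split by (rule sum.union_disjoint) auto
  moreover have L: "sum F {..j} = (-1)^j * (\<Sum>i\<le>j. (-1)^i * (1 / (a + real i * h)))"
  proof -
    have "sum F {..j} = (\<Sum>i\<in>{0..j}. F (j + 0 - i))"
      unfolding atLeast0AtMost[symmetric] by (rule sum.atLeastAtMost_rev)
    also have "\<dots> = (\<Sum>i\<le>j. (-1)^j * ((-1)^i * (1 / (a + real i * h))))"
      unfolding atLeast0AtMost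
    proof (rule sum.cong[OF refl])
      fix i assume "i \<in> {..j}"
      then have ij: "i \<le> j" by simp
      have p: "(-1::real)^(j - i) = (-1)^j * (-1)^i"
      proof -
        have "(-1::real)^j = (-1)^(j-i) * (-1)^i" using ij by (simp add: power_add[symmetric])
        then have "(-1::real)^j * (-1)^i = (-1)^(j-i) * ((-1)^i * (-1)^i)" by simp
        also have "(-1::real)^i * (-1)^i = 1" by (simp add: power_add[symmetric] )
        finally show ?thesis by simp
      qed
      have d: "x - node n (j - i) = a + real i * h" using ij by (simp add: a_def nodej of_nat_diff algebra_simps)
      show "F (j + 0 - i) = (-1)^j * ((-1)^i * (1 / (a + real i * h)))"
        by (simp add: F_def p d)
    qed
    finally show ?thesis by (simp add: sum_distrib_left)
  qed
  moreover have R: "sum F {Suc j..n} = (-1)^j * (\<Sum>i\<le>n - Suc j. (-1)^i * (1 / (b + real i * h)))"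
  proof -
    have "sum F {Suc j..n} = (\<Sum>i\<in>{0..n - Suc j}. F (Suc j + i))"
      using jn by (subst sum.atLeastAtMost_shift_0) (auto simp: comp_def)
    also have "\<dots> = (\<Sum>i\<le>n - Suc j. (-1)^j * ((-1)^i * (1 / (b + real i * h))))"
      unfolding atLeast0AtMost
    proof (rule sum.cong[OF refl])
      fix i
      have d: "x - node n (Suc j + i) = - (b + real i * h)" by (simp add: b_def nodej algebra_simps)
      have d2: "x - node n (Suc (j + i)) = - (b + real i * h)" using d by simp
      show "F (Suc j + i) = (-1)^j * ((-1)^i * (1 / (b + real i * h)))"
        by (simp add: F_def d2 power_add minus_divide_right)
    qed
    finally show ?thesis by (simp add: sum_distrib_left)
  qed
  ultimately have e: "(-1)^j * Bden n x = (\<Sum>i\<le>j. (-1)^i * (1 / (a + real i * h)))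
      + (\<Sum>i\<le>n - Suc j. (-1)^i * (1 / (b + real i * h)))"
    by (simp add: algebra_simps power_add[symmetric] flip: power_add)
  have mono: "\<And>c i. c > 0 \<Longrightarrow> 1 / (c + real (Suc i) * h) \<le> 1 / (c + real i * h)"
    using h0 by (auto intro!: divide_left_mono simp: algebra_simps add_pos_nonneg)
  have pos: "\<And>c i. c > 0 \<Longrightarrow> 1 / (c + real i * h) \<ge> 0"
    using h0 by (auto intro!: add_pos_nonneg)
  have La: "(\<Sum>i\<le>j. (-1)^i * (1 / (a + real i * h))) \<ge> 1/a - 1/(a+h)"
    using alt_lower[of "\<lambda>i. 1 / (a + real i * h)" j] mono[OF a0] pos[OF a0] by simp
  have Rb: "(\<Sum>i\<le>n - Suc j. (-1)^i * (1 / (b + real i * h))) \<ge> 1/b - 1/(b+h)"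
    using alt_lower[of "\<lambda>i. 1 / (b + real i * h)" "n - Suc j"] mono[OF b0] pos[OF b0] by simp
  have "(-1)^j * Bden n x \<ge> 2/h" using e La Rb recip_ineq[OF a0 b0 ab] by linarith
  moreover have "2/h = real n" using n by (simp add: h_def)
  moreover have "\<bar>(-1)^j * Bden n x\<bar> = \<bar>Bden n x\<bar>" by (simp add: abs_mult)
  ultimately show ?thesis by linarith
qed


lemma conv_in:
  fixes z t s :: real
  assumes z: "z \<in> {-1..1}" and t: "t \<in> {-1..1}" and s: "s \<in> {0..1}"
  shows "z + s*(t-z) \<in> {-1..1}"
proof -
  have "z + s*(t-z) = (1-s)*z + s*t" by (simp add: algebra_simps)
  moreover have "(1-s)*z \<ge> (1-s)*(-1)" "s*t \<ge> s*(-1)" "(1-s)*z \<le> (1-s)*1" "s*t \<le> s*1"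
    using s z t mult_left_mono[of "-1" z "1-s"] mult_left_mono[of "-1" t s]
      mult_left_mono[of z 1 "1-s"] mult_left_mono[of t 1 s] by auto
  ultimately show ?thesis by auto
qed

lemma var_le_tv:
  assumes bv: "bounded_variation g a b" and "sorted xs" "set xs \<subseteq> {a..b}"
  shows "var_sum g xs \<le> total_variation g a b"
  unfolding total_variation_def
  by (rule cSup_upper) (use assms in \<open>auto simp: var_sums_def bounded_variation_def\<close>)

lemma node_in: "n \<ge> 1 \<Longrightarrow> k \<le> n \<Longrightarrow> node n k \<in> {-1..1}"
  by (simp add: node_def field_simps)

lemma node_mono: "n \<ge> 1 \<Longrightarrow> k \<le> m \<Longrightarrow> node n k \<le> node n m"
  by (simp add: node_def divide_right_mono)

lemma g_var:
  fixes f f' :: "real \<Rightarrow> real"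
  assumes deriv: "\<And>x. x \<in> {-1..1} \<Longrightarrow> (f has_real_derivative f' x) (at x within {-1..1})"
    and bv: "bounded_variation f' (-1) 1" and n: "n \<ge> 1"
    and x: "x \<in> {-1..1}" and nn: "\<And>k. k \<le> n \<Longrightarrow> x \<noteq> node n k"
  shows "(\<Sum>k<n. \<bar>(f (node n (Suc k)) - f x)/(node n (Suc k) - x) - (f (node n k) - f x)/(node n k - x)\<bar>)
          \<le> total_variation f' (-1) 1"
proof -
  define y where "y k = node n k" for k
  define D where "D k = (f (y (Suc k)) - f x)/(y (Suc k) - x) - (f (y k) - f x)/(y k - x)" for k
  define hk where "hk k s = f' (x + s*(y (Suc k) - x)) - f' (x + s*(y k - x))" for k s
  have int: "(hk k has_integral D k) {0..1}" if "k < n" for k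
    unfolding hk_def D_def
    by (rule has_integral_diff; rule integ_rep[OF deriv x])
       (use that nn[of k] nn[of "Suc k"] node_in[OF n, of k] node_in[OF n, of "Suc k"] in \<open>auto simp: y_def\<close>)
  have "((\<lambda>s. \<Sum>k<n. sgn (D k) * hk k s) has_integral (\<Sum>k<n. sgn (D k) * D k)) {0..1}"
    by (rule has_integral_sum) (auto intro!: has_integral_mult_right int)
  moreover have "((\<lambda>s::real. total_variation f' (-1) 1) has_integral total_variation f' (-1) 1) {0..1}"
    using has_integral_const_real[of "total_variation f' (-1) 1" 0 1] by simp
  moreover have "(\<Sum>k<n. sgn (D k) * hk k s) \<le> total_variation f' (-1) 1" if s: "s \<in> {0..1}" for s
  proof -
    define w where "w k = x + s*(y k - x)" for k
    have "(\<Sum>k<n. sgn (D k) * hk k s) \<le> (\<Sum>k<n. \<bar>hk k s\<bar>)"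
    proof (rule sum_mono)
      fix k
      have "sgn (D k) * hk k s \<le> \<bar>sgn (D k) * hk k s\<bar>" by simp
      also have "\<dots> \<le> \<bar>hk k s\<bar>" by (simp add: abs_mult abs_sgn_eq)
      finally show "sgn (D k) * hk k s \<le> \<bar>hk k s\<bar>" .
    qed
    also have "\<dots> = var_sum f' (map w [0..<Suc n])"
      unfolding var_sum_def by (rule sum.cong) (auto simp: hk_def w_def nth_append simp del: upt_Suc)
    also have "\<dots> \<le> total_variation f' (-1) 1"
    proof (rule var_le_tv[OF bv])
      show "sorted (map w [0..<Suc n])"
        unfolding sorted_iff_nth_mono
        using s by (auto simp: w_def y_def simp del: upt_Suc intro!: mult_left_mono node_mono[OF n])
      show "set (map w [0..<Suc n]) \<subseteq> {- 1..1}"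
        using s x node_in[OF n] by (auto simp: w_def y_def simp del: upt_Suc intro!: conv_in)
    qed
    finally show ?thesis .
  qed
  ultimately have "(\<Sum>k<n. sgn (D k) * D k) \<le> total_variation f' (-1) 1"
    by (rule has_integral_le)
  moreover have "sgn (D k) * D k = \<bar>D k\<bar>" for k by (simp add: sgn_mult_abs abs_sgn)
  ultimately show ?thesis by (simp add: D_def y_def)
qed


theorem theorem3:
  fixes f f' :: "real \<Rightarrow> real" and n :: nat
  assumes deriv: "\<And>x. x \<in> {-1..1} \<Longrightarrow> (f has_real_derivative f' x) (at x within {-1..1})"
    and bv: "bounded_variation f' (-1) 1"
    and n: "n \<ge> 1"
  shows "real n * sup_norm (\<lambda>x. berrut n f x - f x) {-1..1}
           \<le> total_variation f' (-1) 1 / 2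
             + max (sup_norm (Ofun f) {-1<..<1}) (sup_norm (Efun f) {-1<..<1})"
proof -
  define T where "T = total_variation f' (-1) 1"
  have T0: "T \<ge> 0"
    using var_le_tv[OF bv, of "[]"] by (simp add: T_def var_sum_def)
  define M where "M = \<bar>f' (-1)\<bar> + T"
  have fM: "\<bar>f' t\<bar> \<le> M" if "t \<in> {-1..1}" for t
  proof -
    have "var_sum f' [-1, t] \<le> T" unfolding T_def using that by (intro var_le_tv[OF bv]) auto
    then have "\<bar>f' t - f' (-1)\<bar> \<le> T" by (simp add: var_sum_def)
    then show ?thesis by (simp add: M_def)
  qed
  have gM: "\<bar>(f t - f z)/(t-z)\<bar> \<le> M" if "z \<in> {-1..1}" "t \<in> {-1..1}" "t \<noteq> z" for z t
  proof -
    have I: "((\<lambda>s. f' (z + s*(t-z))) has_integral (f t - f z)/(t-z)) {0..1}"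
      by (rule integ_rep[OF deriv that])
    have CM: "((\<lambda>s::real. M) has_integral M) {0..1}" "((\<lambda>s::real. -M) has_integral -M) {0..1}"
      using has_integral_const_real[of M 0 1] has_integral_const_real[of "-M" 0 1] by simp_all
    have b: "\<bar>f' (z + s*(t-z))\<bar> \<le> M" if "s \<in> {0..1}" for s
      using fM conv_in[OF \<open>z \<in> _\<close> \<open>t \<in> _\<close> that] by blast
    have "(f t - f z)/(t-z) \<le> M" by (rule has_integral_le[OF I CM(1)]) (use b in \<open>auto simp: abs_le_iff\<close>)
    moreover have "-M \<le> (f t - f z)/(t-z)" by (rule has_integral_le[OF CM(2) I]) (use b in \<open>force simp: abs_le_iff\<close>)
    ultimately show ?thesis unfolding abs_le_iff by (auto simp: field_simps)
  qed
  define G where "G z t = (f t - f z)/(t-z)" for z t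
  have OG: "Ofun f z = (G z 1 - G z (-1))/2" if "z \<in> {-1<..<1}" for z
  proof -
    have "z - 1 \<noteq> 0" "z + 1 \<noteq> 0" "1 - z \<noteq> 0" "-1 - z \<noteq> 0" using that by auto
    then show ?thesis by (simp add: Ofun_def G_def divide_simps) (simp add: algebra_simps)
  qed
  have EG: "Efun f z = -(G z 1 + G z (-1))/2" if "z \<in> {-1<..<1}" for z
  proof -
    have "z - 1 \<noteq> 0" "z + 1 \<noteq> 0" "1 - z \<noteq> 0" "-1 - z \<noteq> 0" using that by auto
    then show ?thesis by (simp add: Efun_def G_def divide_simps) (simp add: algebra_simps)
  qed
  have OM: "\<bar>Ofun f z\<bar> \<le> M" if "z \<in> {-1<..<1}" for z
  proof -
    have "\<bar>G z 1\<bar> \<le> M" "\<bar>G z (-1)\<bar> \<le> M" using gM[of z 1] gM[of z "-1"] that by (auto simp: G_def)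
    then show ?thesis unfolding OG[OF that] abs_le_iff by (auto simp: field_simps)
  qed
  have EM: "\<bar>Efun f z\<bar> \<le> M" if "z \<in> {-1<..<1}" for z
  proof -
    have "\<bar>G z 1\<bar> \<le> M" "\<bar>G z (-1)\<bar> \<le> M" using gM[of z 1] gM[of z "-1"] that by (auto simp: G_def)
    then show ?thesis unfolding EG[OF that] abs_le_iff by (auto simp: field_simps)
  qed
  define SO where "SO = sup_norm (Ofun f) {-1<..<1}"
  define SE where "SE = sup_norm (Efun f) {-1<..<1}"
  have Ole: "\<bar>Ofun f z\<bar> \<le> SO" if "z \<in> {-1<..<1}" for z
    unfolding SO_def sup_norm_def
    by (rule cSup_upper) (use that OM in \<open>auto intro!: bdd_aboveI[of _ M]\<close>)
  have Ele: "\<bar>Efun f z\<bar> \<le> SE" if "z \<in> {-1<..<1}" for z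
    unfolding SE_def sup_norm_def
    by (rule cSup_upper) (use that EM in \<open>auto intro!: bdd_aboveI[of _ M]\<close>)
  have SO0: "SO \<ge> 0" using Ole[of 0] by simp
  define C where "C = T/2 + max SO SE"
  have C0: "C \<ge> 0" using T0 SO0 by (simp add: C_def)
  have n0: "real n > 0" using n by simp
  have pt: "\<bar>berrut n f x - f x\<bar> \<le> C / real n" if x: "x \<in> {-1..1}" for x
  proof (cases "\<exists>k\<le>n. x = node n k")
    case True
    then show ?thesis using C0 n0 by (simp add: berrut_def)
  next
    case False
    then have nn: "\<And>k. k \<le> n \<Longrightarrow> x \<noteq> node n k" by auto
    have y0: "node n 0 = -1" and yn: "node n n = 1" using n by (auto simp: node_def)
    have xi: "x \<in> {-1<..<1}" using x nn[of 0] nn[of n] y0 yn by auto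
    define a where "a k = G x (node n k)" for k
    have den: "\<bar>Bden n x\<bar> \<ge> real n" by (rule den_bound[OF n xi nn])
    then have den0: "Bden n x \<noteq> 0" using n0 by auto
    have num: "Bnum n f x - f x * Bden n x = - (\<Sum>k\<le>n. (-1)^k * a k)"
      unfolding Bnum_def Bden_def sum_distrib_left sum_negf[symmetric] sum_subtractf[symmetric]
    proof (rule sum.cong[OF refl])
      fix k assume "k \<in> {..n}"
      then have "x - node n k \<noteq> 0" "node n k - x \<noteq> 0" using nn by auto
      then show "(-1) ^ k * f (node n k) / (x - node n k) - f x * ((-1) ^ k / (x - node n k)) =
          - ((-1) ^ k * a k)"
        by (simp add: a_def G_def divide_simps) (simp add: algebra_simps)
    qed
    have err: "berrut n f x - f x = - (\<Sum>k\<le>n. (-1)^k * a k) / Bden n x"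
    proof -
      have "berrut n f x = Bnum n f x / Bden n x" using False unfolding berrut_def by (simp only: if_False)
      then show ?thesis using den0 num by (simp add: field_simps)
    qed
    have idt: "2 * (\<Sum>k\<le>n. (-1)^k * a k) = a 0 + (-1)^n * a n + (\<Sum>k<n. (-1)^k * (a k - a (Suc k)))"
      by (rule alt_identity)
    have var: "(\<Sum>k<n. \<bar>a (Suc k) - a k\<bar>) \<le> T"
      using g_var[OF deriv bv n x nn] by (simp add: a_def G_def T_def)
    have vs: "\<bar>\<Sum>k<n. (-1)^k * (a k - a (Suc k))\<bar> \<le> T"
    proof -
      have "\<bar>\<Sum>k<n. (-1)^k * (a k - a (Suc k))\<bar> \<le> (\<Sum>k<n. \<bar>(-1)^k * (a k - a (Suc k))\<bar>)"
        by (rule sum_abs)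
      also have "\<dots> = (\<Sum>k<n. \<bar>a (Suc k) - a k\<bar>)" by (simp add: abs_mult abs_minus_commute)
      finally show ?thesis using var by linarith
    qed
    have ends: "\<bar>a 0 + (-1)^n * a n\<bar> \<le> 2 * max SO SE"
    proof (cases "even n")
      case True
      then have "a 0 + (-1)^n * a n = -2 * Efun f x"
        using EG[OF xi] by (simp add: a_def y0 yn)
      then show ?thesis using Ele[OF xi] by (simp add: abs_mult)
    next
      case False
      then have "a 0 + (-1)^n * a n = -2 * Ofun f x"
        using OG[OF xi] by (simp add: a_def y0 yn)
      then show ?thesis using Ole[OF xi] by (simp add: abs_mult)
    qed
    have S: "\<bar>\<Sum>k\<le>n. (-1)^k * a k\<bar> \<le> C"
    proof -
      have "2 * \<bar>\<Sum>k\<le>n. (-1)^k * a k\<bar> \<le> \<bar>a 0 + (-1)^n * a n\<bar> + \<bar>\<Sum>k<n. (-1)^k * (a k - a (Suc k))\<bar>"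
        using idt abs_triangle_ineq[of "a 0 + (-1)^n * a n" "\<Sum>k<n. (-1)^k * (a k - a (Suc k))"]
        by (metis abs_mult abs_numeral)
      then show ?thesis using ends vs by (simp add: C_def)
    qed
    have "\<bar>berrut n f x - f x\<bar> = \<bar>\<Sum>k\<le>n. (-1)^k * a k\<bar> / \<bar>Bden n x\<bar>"
      by (simp add: err abs_divide)
    also have "\<dots> \<le> C / real n"
      using S den n0 C0 by (intro frac_le) auto
    finally show ?thesis .
  qed
  have "sup_norm (\<lambda>x. berrut n f x - f x) {-1..1} \<le> C / real n"
    unfolding sup_norm_def by (rule cSup_least) (use pt in auto)
  then have "real n * sup_norm (\<lambda>x. berrut n f x - f x) {-1..1} \<le> real n * (C / real n)"
    using n0 by (intro mult_left_mono) auto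
  then show ?thesis using n0 by (simp add: C_def T_def SO_def SE_def)
qed

end
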